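(* Let $(X,d,\mu)$ be a metric measure space satisfying the generalized Bishop--Gromov inequality $\mathrm{BG}(k,n)$ with constant $C$, for some $k\in\mathbb{R}$, $n\ge 1$ and $C\ge 1$. If $x\in X$ is a local cut point of $X$, then $\deg(x)\le C^2+1$.
   Context: A metric measure space $(X,d,\mu)$ means a complete, locally compact length space $(X,d)$ equipped with a Borel measure $\mu$. $B_r(x)$ and $\overline B_r(x)$ denote the open and closed balls of radius $r$ about $x$. For $k\in\mathbb{R}$ let $\mathsf s_k(t)=\sin(\sqrt{k}\,t)/\sqrt{k}$ if $k>0$, $\mathsf s_k(t)=t$ if $k=0$, $\mathsf s_k(t)=\sinh(\sqrt{-k}\,t)/\sqrt{-k}$ if $k<0$. For real $n\ge1$ and $0\le r_1<r_2$ set $V_{k,n}(r_1,r_2)=\alpha_{n-1}\int_{r_1}^{r_2}\mathsf s_k(t)^{n-1}\,dt$ with $\alpha_{n-1}=2\pi^{n/2}/\Gamma(n/2)$. For $x\in X$ let $A_{r_1,r_2}(x)=B_{r_2}(x)\setminus\overline B_{r_1}(x)$ and $A_{0,r}(x)=B_r(x)$. For a measurable $U\subset A_{r_1,r_2}(x)$ and $0\le s_1<s_2$ with $s_1\le r_1$, $s_2\le r_2$, let $S_{s_1,s_2}(x,U)=\{y\in A_{s_1,s_2}(x): d(x,y)+d(y,z)=d(x,z)\text{ for some }z\in U\}$. $(X,d,\mu)$ satisfies $\mathrm{BG}(k,n)$ with constant $C\ge1$ if for every $x\in X$, all $0\le r_1<r_2$, $0\le s_1<s_2$ with $s_1\le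 r_1$, $s_2\le r_2$, and every measurable $U\subset A_{r_1,r_2}(x)$, one has $\mu(U)/\mu(S_{s_1,s_2}(x,U))\le C\,V_{k,n}(r_1,r_2)/V_{k,n}(s_1,s_2)$. A point $x\in X$ is a local cut point if $U\setminus\{x\}$ is disconnected for some connected neighborhood $U$ of $x$. The degree $\deg(x)$ is the supremum, over all connected neighborhoods $U$ of $x$, of the number of connected components of $U\setminus\{x\}$. *)

theory Defs
  imports "HOL-Analysis.Analysis"
begin

definition sk :: "real \<Rightarrow> real \<Rightarrow> real" where
  "sk k t = (if k > 0 then sin (sqrt k * t) / sqrt k
             else if k = 0 then t
             else sinh (sqrt (- k) * t) / sqrt (- k))"

text \<open>Real power s^(n-1) for real n >= 1; s^0 = 1; nonpositive bases give 0 when n > 1.\<close>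
definition rpow :: "real \<Rightarrow> real \<Rightarrow> real" where
  "rpow s n = (if n = 1 then 1 else if s > 0 then s powr (n - 1) else 0)"

definition alpha :: "real \<Rightarrow> real" where
  "alpha n = 2 * pi powr (n / 2) / Gamma (n / 2)"   (* alpha_{n-1} = alpha n *)

definition Vkn :: "real \<Rightarrow> real \<Rightarrow> real \<Rightarrow> real \<Rightarrow> real" where
  "Vkn k n r1 r2 = alpha n * integral {r1..r2} (\<lambda>t. rpow (sk k t) n)"

definition curve_length :: "(real \<Rightarrow> 'a::metric_space) \<Rightarrow> ennreal" where
  "curve_length \<gamma> =
     (SUP p \<in> {(N, t). t 0 = 0 \<and> t N = 1 \<and> (\<forall>i<N. t i \<le> t (Suc i))}.
        ennreal (\<Sum>i<fst p. dist (\<gamma> (snd p i)) (\<gamma> (snd p (Suc i)))))"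

definition length_space :: "'a::metric_space itself \<Rightarrow> bool" where
  "length_space _ \<longleftrightarrow> (\<forall>x y::'a. ennreal (dist x y) =
      (INF \<gamma> \<in> {\<gamma>. path \<gamma> \<and> pathstart \<gamma> = x \<and> pathfinish \<gamma> = y}. curve_length \<gamma>))"

definition metric_measure_space :: "'a::metric_space measure \<Rightarrow> bool" where
  "metric_measure_space \<mu> \<longleftrightarrow>
     complete (UNIV :: 'a set) \<and> locally_compact_space (euclidean :: 'a topology) \<and>
     length_space TYPE('a) \<and> sets \<mu> = sets borel \<and>
     (\<forall>x r. r > 0 \<longrightarrow> 0 < emeasure \<mu> (ball x r) \<and> emeasure \<mu> (ball x r) < \<infinity>)"

definition outer_meas :: "'a measure \<Rightarrow> 'a set \<Rightarrow> ennreal" where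
  "outer_meas \<mu> A = (INF B \<in> {B \<in> sets \<mu>. A \<subseteq> B}. emeasure \<mu> B)"

definition annulus :: "'a::metric_space \<Rightarrow> real \<Rightarrow> real \<Rightarrow> 'a set" where
  "annulus x r1 r2 = (if r1 = 0 then ball x r2 else ball x r2 - cball x r1)"

definition Sset :: "'a::metric_space \<Rightarrow> real \<Rightarrow> real \<Rightarrow> 'a set \<Rightarrow> 'a set" where
  "Sset x s1 s2 U = {y \<in> annulus x s1 s2. \<exists>z\<in>U. dist x y + dist y z = dist x z}"

definition BG :: "real \<Rightarrow> real \<Rightarrow> real \<Rightarrow> 'a::metric_space measure \<Rightarrow> bool" where
  "BG k n C \<mu> \<longleftrightarrow>
     (\<forall>x r1 r2 s1 s2 U. 0 \<le> r1 \<and> r1 < r2 \<and> 0 \<le> s1 \<and> s1 < s2 \<and> s1 \<le> r1 \<and> s2 \<le> r2 \<and>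
        U \<in> sets \<mu> \<and> U \<subseteq> annulus x r1 r2 \<longrightarrow>
        emeasure \<mu> U * ennreal (Vkn k n s1 s2)
          \<le> ennreal C * ennreal (Vkn k n r1 r2) * outer_meas \<mu> (Sset x s1 s2 U))"

definition local_cut_point :: "'a::topological_space \<Rightarrow> bool" where
  "local_cut_point x \<longleftrightarrow> (\<exists>U. open U \<and> x \<in> U \<and> connected U \<and> \<not> connected (U - {x}))"

definition ncomp :: "'a::topological_space set \<Rightarrow> ennreal" where
  "ncomp S = (if finite (components S) then of_nat (card (components S)) else \<infinity>)"

definition deg :: "'a::topological_space \<Rightarrow> ennreal" where
  "deg x = (SUP U \<in> {U. open U \<and> x \<in> U \<and> connected U}. ncomp (U - {x}))"

end

theory Submission
  imports Defs
begin

lemma curve_length_ge: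
  assumes "0 \<le> t" "t \<le> 1"
  shows "ennreal (dist (\<gamma> 0) (\<gamma> t) + dist (\<gamma> t) (\<gamma> 1)) \<le> curve_length \<gamma>"
proof -
  define tt where "tt = (\<lambda>i::nat. if i = 0 then 0 else if i = 1 then t else (1::real))"
  have mem: "(2::nat, tt) \<in> {(N, t). t 0 = 0 \<and> t N = 1 \<and> (\<forall>i<N. t i \<le> t (Suc i))}"
    using assms by (auto simp: tt_def less_2_cases_iff)
  have eq: "(\<Sum>i<fst (2::nat, tt). dist (\<gamma> (snd (2::nat, tt) i)) (\<gamma> (snd (2::nat,tt) (Suc i))))
      = dist (\<gamma> 0) (\<gamma> t) + dist (\<gamma> t) (\<gamma> 1)"
    by (simp add: tt_def numeral_2_eq_2)
  show ?thesis
    unfolding curve_length_def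
    by (rule SUP_upper2[OF mem], subst eq, simp)
qed

lemma short_path:
  assumes ls: "length_space TYPE('a::metric_space)" and d: "dist y z < L"
  shows "\<exists>\<gamma>. path \<gamma> \<and> pathstart \<gamma> = (y::'a) \<and> pathfinish \<gamma> = z \<and>
           (\<forall>t\<in>{0..1}. dist y (\<gamma> t) + dist (\<gamma> t) z < L)"
proof -
  have "ennreal (dist y z) = (INF \<gamma> \<in> {\<gamma>. path \<gamma> \<and> pathstart \<gamma> = y \<and> pathfinish \<gamma> = z}. curve_length \<gamma>)"
    using ls unfolding length_space_def by blast
  moreover have "ennreal (dist y z) < ennreal L"
  proof -
    have "0 < L" using d zero_le_dist[of y z] by linarith
    then show ?thesis using d by (intro ennreal_lessI)
  qed
  ultimately obtain \<gamma> where g: "path \<gamma>" "pathstart \<gamma> = y" "pathfinish \<gamma> = z" "curve_length \<gamma> < ennreal L"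
    by (auto simp: INF_less_iff)
  have "dist y (\<gamma> t) + dist (\<gamma> t) z < L" if "t \<in> {0..1}" for t
  proof -
    have "ennreal (dist (\<gamma> 0) (\<gamma> t) + dist (\<gamma> t) (\<gamma> 1)) < ennreal L"
      using curve_length_ge[of t \<gamma>] that g(4) by auto
    then have "dist (\<gamma> 0) (\<gamma> t) + dist (\<gamma> t) (\<gamma> 1) < L"
      by (subst (asm) ennreal_less_iff) auto
    then show ?thesis using g(2,3) by (simp add: pathstart_def pathfinish_def)
  qed
  then show ?thesis using g by blast
qed

lemma ball_connected:
  assumes ls: "length_space TYPE('a::metric_space)"
  shows "connected (ball (p::'a) r)"
proof -
  have "path_component (ball p r) p q" if "q \<in> ball p r" for q
  proof -
    have "dist p q < r" using that by simp
    from short_path[OF ls this] obtain \<gamma> where g: "path \<gamma>" "pathstart \<gamma> = p" "pathfinish \<gamma> = q"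
       "\<forall>t\<in>{0..1}. dist p (\<gamma> t) + dist (\<gamma> t) q < r"
      by blast
    have "path_image \<gamma> \<subseteq> ball p r"
    proof
      fix w assume "w \<in> path_image \<gamma>"
      then obtain t where t: "t \<in> {0..1}" "w = \<gamma> t" by (auto simp: path_image_def)
      have "dist p (\<gamma> t) + dist (\<gamma> t) q < r" using g(4) t(1) by blast
      then show "w \<in> ball p r" unfolding t(2) mem_ball using zero_le_dist[of "\<gamma> t" q] by linarith
    qed
    then show ?thesis using g unfolding path_component_def by blast
  qed
  then have "path_connected (ball p r)"
    unfolding path_connected_component by (meson path_component_sym path_component_trans)
  then show ?thesis by (simp add: path_connected_imp_connected)
qed

lemma open_comp:
  assumes ls: "length_space TYPE('a::metric_space)" and "open (S::'a set)" and "c \<in> components S"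
  shows "open c"
unfolding open_contains_ball proof
  fix y assume y: "y \<in> c"
  then have cy: "c = connected_component_set S y"
    using assms(3) by (metis components_iff connected_component_eq)
  obtain e where "e > 0" "ball y e \<subseteq> S" using assms(2) y in_components_subset[OF assms(3)]
    by (meson openE subsetD)
  then have "ball y e \<subseteq> c" unfolding cy
    by (intro connected_component_maximal ball_connected[OF ls]) auto
  then show "\<exists>e>0. ball y e \<subseteq> c" using \<open>e>0\<close> by blast
qed

lemma comp_near:
  assumes ls: "length_space TYPE('a::metric_space)" and U: "open U" "connected U" "(x::'a) \<in> U"
    and a: "a \<in> components (U - {x})" and d: "\<delta> > 0"
  shows "a \<inter> ball x \<delta> \<noteq> {}"
proof
  assume dis: "a \<inter> ball x \<delta> = {}"
  obtain e where e: "e > 0" "ball x e \<subseteq> U" using U by (meson openE)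
  define B where "B = U - a"
  have oU: "open (U - {x})" using U(1) by (simp add: open_delete)
  have oa: "open a" using open_comp[OF ls oU a] .
  have oB: "open B"
    unfolding open_contains_ball
  proof
    fix p assume p: "p \<in> B"
    show "\<exists>e>0. ball p e \<subseteq> B"
    proof (cases "p = x")
      case True
      then show ?thesis using dis e d
        by (intro exI[of _ "min e \<delta>"]) (auto simp: B_def)
    next
      case False
      define b where "b = connected_component_set (U - {x}) p"
      have b: "b \<in> components (U - {x})" using p False by (auto simp: b_def B_def components_iff)
      have "p \<in> b" using p False by (auto simp: b_def B_def)
      then have "b \<noteq> a" using p by (auto simp: B_def)
      then have "b \<inter> a = {}" using components_nonoverlap[OF b a] by blast
      moreover have "b \<subseteq> U" using in_components_subset[OF b] by blast
      moreover have "p \<in> b" using p False by (auto simp: b_def B_def)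
      moreover obtain e' where "e' > 0" "ball p e' \<subseteq> b" using open_comp[OF ls oU b] \<open>p \<in> b\<close>
        by (meson openE)
      ultimately show ?thesis by (intro exI[of _ e']) (auto simp: B_def)
    qed
  qed
  have "a \<inter> U = {} \<or> B \<inter> U = {}"
    by (rule connectedD[OF U(2) oa oB]) (auto simp: B_def)
  moreover have "a \<noteq> {}" "a \<subseteq> U" using a in_components_nonempty in_components_subset by blast+
  moreover have "x \<in> B" using U(3) in_components_subset[OF a] by (auto simp: B_def)
  ultimately show False using U(3) by blast
qed


lemma sepdist:
  assumes ls: "length_space TYPE('a::metric_space)" and U: "ball (x::'a) (4*\<rho>) \<subseteq> U"
    and a: "a \<in> components (U - {x})" and b: "b \<in> components (U - {x})" and ab: "a \<noteq> b"
    and y: "y \<in> a" and z: "z \<in> b" and dy: "dist x y < \<rho>" and dz: "dist x z < \<rho>"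
  shows "dist y z = dist y x + dist x z"
proof (rule antisym)
  show "dist y z \<le> dist y x + dist x z" by (rule dist_triangle)
  show "dist y x + dist x z \<le> dist y z"
  proof (rule field_le_epsilon)
    fix e :: real assume e: "0 < e"
    define L where "L = dist y z + min e \<rho>"
    have dyz: "dist y z < 2*\<rho>" using dist_triangle[of y z x] dy dz by (simp add: dist_commute)
    have "0 < \<rho>" using dy zero_le_dist[of x y] by linarith
    then have "dist y z < L" using e L_def by auto
    from short_path[OF ls this] obtain \<gamma> where g: "path \<gamma>" "pathstart \<gamma> = y" "pathfinish \<gamma> = z"
       "\<forall>t\<in>{0..1}. dist y (\<gamma> t) + dist (\<gamma> t) z < L" by blast
    have img: "path_image \<gamma> \<subseteq> U"
    proof
      fix w assume "w \<in> path_image \<gamma>"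
      then obtain t where t: "t \<in> {0..1}" "w = \<gamma> t" by (auto simp: path_image_def)
      have "dist y (\<gamma> t) + dist (\<gamma> t) z < L" using g(4) t(1) by blast
      moreover have "dist x (\<gamma> t) \<le> dist x y + dist y (\<gamma> t)" by (rule dist_triangle)
      moreover have "L \<le> dist y z + \<rho>" by (simp add: L_def)
      ultimately have "dist x w < 4*\<rho>" unfolding t(2) using dyz dy zero_le_dist[of "\<gamma> t" z] by linarith
      then show "w \<in> U" using U by auto
    qed
    have "x \<in> path_image \<gamma>"
    proof (rule ccontr)
      assume "x \<notin> path_image \<gamma>"
      then have "path_image \<gamma> \<subseteq> U - {x}" using img by blast
      moreover have "y \<in> path_image \<gamma>" "z \<in> path_image \<gamma>" using g(2,3)
        by (auto simp: pathstart_in_path_image[of \<gamma>, simplified g(2)] pathfinish_in_path_image[of \<gamma>, simplified g(3)])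
      ultimately have "a = b" using joinable_components_eq[of "path_image \<gamma>" "U - {x}" a b]
        connected_path_image[OF g(1)] a b y z by blast
      then show False using ab by blast
    qed
    then obtain t where t: "t \<in> {0..1}" "\<gamma> t = x" by (auto simp: path_image_def)
    have "dist y x + dist x z < L" using g(4) t by (metis dist_commute)
    then show "dist y x + dist x z \<le> dist y z + e" unfolding L_def by linarith
  qed
qed

lemma comp_of:
  assumes "w \<in> S" shows "connected_component_set S w \<in> components S" "w \<in> connected_component_set S w"
  using assms by (auto simp: components_iff)

lemma Sset_sub:
  assumes ls: "length_space TYPE('a::metric_space)" and U: "ball (x::'a) (4*\<rho>) \<subseteq> U"
    and a: "a \<in> components (U - {x})" and y: "y \<in> a" and r: "r = dist x y" "r < \<rho>"
    and d: "0 < \<delta>" "\<delta> < r" "3*\<delta> \<le> \<rho>"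
    and Z: "\<And>z. z \<in> Z \<Longrightarrow> \<exists>b. b \<in> components (U - {x}) \<and> b \<noteq> a \<and> z \<in> b \<and> dist x z < \<delta>"
  shows "Sset y (r - \<delta>) r Z \<subseteq> a \<inter> ball x \<delta>"
proof
  fix w assume "w \<in> Sset y (r - \<delta>) r Z"
  then obtain z where w1: "r - \<delta> < dist y w" "dist y w < r" and z: "z \<in> Z"
     and wz: "dist y w + dist w z = dist y z"
    using d unfolding Sset_def annulus_def by auto
  obtain b where b: "b \<in> components (U - {x})" "b \<noteq> a" "z \<in> b" "dist x z < \<delta>" using Z[OF z] by blast
  have yz: "dist y z = dist y x + dist x z"
    by (rule sepdist[OF ls U a b(1) b(2)[symmetric] y b(3)]) (use r d b(4) in auto)
  have wz2: "dist w z < \<delta> + dist x z" using wz yz w1 r(1) by (simp add: dist_commute)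
  have xw: "dist x w < 3*\<delta>" using dist_triangle[of x w z] wz2 b(4) by (simp add: dist_commute)
  have wU: "w \<in> U" using U xw d by auto
  have wx: "w \<noteq> x" using w1 r(1) by (auto simp: dist_commute)
  define c where "c = connected_component_set (U - {x}) w"
  have c: "c \<in> components (U - {x})" "w \<in> c" using comp_of[of w "U - {x}"] wU wx c_def by auto
  have ca: "c = a"
  proof (rule ccontr)
    assume "c \<noteq> a"
    have "dist y w = dist y x + dist x w"
      by (rule sepdist[OF ls U a c(1) \<open>c \<noteq> a\<close>[symmetric] y c(2)]) (use r d xw in auto)
    then show False using w1 r(1) by (simp add: dist_commute)
  qed
  have "dist w z = dist w x + dist x z"
    by (rule sepdist[OF ls U c(1) b(1)]) (use ca b c r d xw in auto)
  then have "dist w x < \<delta>" using wz yz w1 r(1) by (simp add: dist_commute)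
  then show "w \<in> a \<inter> ball x \<delta>" using c(2) ca by (simp add: dist_commute)
qed


lemma sk_pos:
  assumes "0 < t" "k > 0 \<Longrightarrow> sqrt k * t < pi"
  shows "sk k t > 0"
  using assms by (auto simp: sk_def intro!: divide_pos_pos sin_gt_zero)

lemma sk_cont: "continuous_on A (sk k)"
proof -
  consider "k > 0" | "k = 0" | "k < 0" by linarith
  then show ?thesis
  proof cases
    case 1
    then have "sk k = (\<lambda>t. sin (sqrt k * t) / sqrt k)" by (auto simp: sk_def fun_eq_iff)
    then show ?thesis by (simp, intro continuous_intros) (use 1 in auto)
  next
    case 2
    then have "sk k = (\<lambda>t. t)" by (auto simp: sk_def fun_eq_iff)
    then show ?thesis by (simp add: continuous_intros)
  next
    case 3
    then have "sk k = (\<lambda>t. sinh (sqrt (-k) * t) / sqrt (-k))" by (auto simp: sk_def fun_eq_iff)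
    then show ?thesis by (simp add: sinh_def, intro continuous_intros) (use 3 in auto)
  qed
qed

lemma f_cont:
  assumes pos: "\<forall>t\<in>A. sk k t > 0"
  shows "continuous_on A (\<lambda>t. rpow (sk k t) n)"
proof (cases "n = 1")
  case True
  then show ?thesis by (simp add: rpow_def continuous_intros)
next
  case False
  have "continuous_on A (\<lambda>t. sk k t powr (n - 1))"
    by (rule continuous_on_powr[OF sk_cont continuous_on_const]) (use pos in force)
  moreover have "\<And>t. t \<in> A \<Longrightarrow> rpow (sk k t) n = sk k t powr (n - 1)"
    using pos False by (auto simp: rpow_def)
  ultimately show ?thesis using continuous_on_cong[of A A "\<lambda>t. rpow (sk k t) n" "\<lambda>t. sk k t powr (n - 1)"]
    by simp
qed

lemma alpha_pos: "n \<ge> 1 \<Longrightarrow> alpha n > 0"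
  by (simp add: alpha_def)

lemma ratio:
  assumes n: "n \<ge> 1" and pos: "\<forall>t\<in>{0<..<R}. sk k t > 0" and r: "0 < r" "2*r < R" and eta: "\<eta> > 0"
  shows "\<exists>\<delta>>0. \<delta> < r \<and> (\<forall>\<delta>'. 0 < \<delta>' \<and> \<delta>' \<le> \<delta> \<longrightarrow>
            0 < Vkn k n (r - \<delta>') r \<and> 0 \<le> Vkn k n r (r + \<delta>') \<and> Vkn k n r (r + \<delta>') \<le> (1 + \<eta>) * Vkn k n (r - \<delta>') r)"
proof -
  define f where "f = (\<lambda>t. rpow (sk k t) n)"
  have fc: "continuous_on {0<..<R} f" unfolding f_def by (rule f_cont[OF pos])
  have rin: "r \<in> {0<..<R}" using r by auto
  have "sk k r > 0" using pos rin by blast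
  then have fr: "f r > 0" by (auto simp: f_def rpow_def)
  have "isCont f r" using fc rin continuous_on_eq_continuous_at[of "{0<..<R}" f] by auto
  define \<theta> where "\<theta> = \<eta> / (2 + \<eta>)"
  have th: "0 < \<theta>" "\<theta> < 1" using eta by (auto simp: \<theta>_def)
  have th2: "1 + \<theta> = (1 + \<eta>) * (1 - \<theta>)" using eta by (simp add: \<theta>_def field_simps)
  obtain d where d: "d > 0" "\<And>t. dist t r < d \<Longrightarrow> dist (f t) (f r) < \<theta> * f r"
    using \<open>isCont f r\<close> th fr unfolding continuous_at_eps_delta by (meson mult_pos_pos)
  define \<delta> where "\<delta> = min (d/2) (r/2)"
  have "\<delta> > 0" "\<delta> < r" using d r by (auto simp: \<delta>_def)
  moreover have "0 < Vkn k n (r - \<delta>') r \<and> 0 \<le> Vkn k n r (r + \<delta>') \<and> Vkn k n r (r + \<delta>') \<le> (1 + \<eta>) * Vkn k n (r - \<delta>') r"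
    if dd: "0 < \<delta>'" "\<delta>' \<le> \<delta>" for \<delta>'
  proof -
    have sub: "{r - \<delta>'..r + \<delta>'} \<subseteq> {0<..<R}" using dd r by (auto simp: \<delta>_def)
    have bnd: "\<bar>f t - f r\<bar> < \<theta> * f r" if "t \<in> {r - \<delta>'..r + \<delta>'}" for t
      using d(2)[of t] that dd by (auto simp: \<delta>_def dist_real_def)
    have i1: "f integrable_on {r..r + \<delta>'}"
      by (rule integrable_continuous_interval, rule continuous_on_subset[OF fc]) (use sub in auto)
    have i2: "f integrable_on {r - \<delta>'..r}"
      by (rule integrable_continuous_interval, rule continuous_on_subset[OF fc]) (use sub in auto)
    have b1: "f t \<le> (1 + \<theta>) * f r" if "t \<in> {r..r + \<delta>'}" for t
    proof -
      have "t \<in> {r - \<delta>'..r + \<delta>'}" using that dd by auto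
      from bnd[OF this] show ?thesis by (simp add: abs_less_iff algebra_simps)
    qed
    have b2: "(1 - \<theta>) * f r \<le> f t" if "t \<in> {r - \<delta>'..r}" for t
    proof -
      have "t \<in> {r - \<delta>'..r + \<delta>'}" using that dd by auto
      from bnd[OF this] show ?thesis by (simp add: abs_less_iff algebra_simps)
    qed
    have b3: "0 \<le> f t" if "t \<in> {r..r + \<delta>'}" for t
    proof -
      have "t \<in> {r - \<delta>'..r + \<delta>'}" using that dd by auto
      from bnd[OF this] mult_strict_right_mono[OF th(2) fr] show ?thesis by (simp add: abs_less_iff algebra_simps)
    qed
    have nn: "0 \<le> integral {r..r + \<delta>'} f" by (rule integral_nonneg[OF i1]) (use b3 in auto)
    have up: "integral {r..r + \<delta>'} f \<le> integral {r..r + \<delta>'} (\<lambda>_. (1 + \<theta>) * f r)"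
      by (rule integral_le[OF i1]) (use b1 in auto)
    have lo: "integral {r - \<delta>'..r} (\<lambda>_. (1 - \<theta>) * f r) \<le> integral {r - \<delta>'..r} f"
      by (rule integral_le[OF _ i2]) (use b2 in auto)
    have up2: "integral {r..r + \<delta>'} f \<le> \<delta>' * ((1 + \<theta>) * f r)" using up dd by (simp add: mult.assoc mult.left_commute)
    have lo2: "\<delta>' * ((1 - \<theta>) * f r) \<le> integral {r - \<delta>'..r} f" using lo dd by (simp add: mult.assoc mult.left_commute)
    have lpos: "0 < \<delta>' * ((1 - \<theta>) * f r)" using dd th fr by simp
    have a: "alpha n > 0" using alpha_pos[OF n] .
    have II: "integral {r..r + \<delta>'} f \<le> (1 + \<eta>) * integral {r - \<delta>'..r} f"
    proof -
      have "integral {r..r + \<delta>'} f \<le> (1 + \<eta>) * (\<delta>' * ((1 - \<theta>) * f r))"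
        using up2 th2 by (simp add: algebra_simps)
      also have "\<dots> \<le> (1 + \<eta>) * integral {r - \<delta>'..r} f"
        using lo2 eta by (intro mult_left_mono) auto
      finally show ?thesis .
    qed
    then have "alpha n * integral {r..r + \<delta>'} f \<le> (1 + \<eta>) * (alpha n * integral {r - \<delta>'..r} f)"
      using mult_left_mono[OF II, of "alpha n"] a by (simp add: algebra_simps)
    moreover have "0 < alpha n * integral {r - \<delta>'..r} f" using a lpos lo2 by simp
    moreover have "0 \<le> alpha n * integral {r..r + \<delta>'} f" using a nn by simp
    ultimately show ?thesis unfolding Vkn_def f_def by simp
  qed
  ultimately show ?thesis by blast
qed


lemma count:
  fixes \<mu> :: "'a::metric_space measure" and x :: 'a and U :: "'a set"
  assumes mms: "metric_measure_space \<mu>" and n: "n \<ge> 1" and C: "C \<ge> 1" and bg: "BG k n C \<mu>"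
    and U: "open U" "connected U" "x \<in> U"
    and J: "J \<subseteq> components (U - {x})" "finite J" "J \<noteq> {}"
  shows "real (card J) - 1 \<le> C"
proof -
  have ls: "length_space TYPE('a)" and sets: "sets \<mu> = sets borel"
    and balls: "\<And>p r. r > 0 \<Longrightarrow> 0 < emeasure \<mu> (ball p r) \<and> emeasure \<mu> (ball p r) < \<infinity>"
    using mms unfolding metric_measure_space_def by auto
  obtain e where e: "e > 0" "ball x e \<subseteq> U" using U by (meson openE)
  define \<rho> where "\<rho> = min (e/4) (pi / (3 * (sqrt \<bar>k\<bar> + 1)))"
  have "0 < pi / (3 * (sqrt \<bar>k\<bar> + 1))"
    by (intro divide_pos_pos mult_pos_pos) (auto intro: add_nonneg_pos)
  then have \<rho>: "\<rho> > 0" using e by (auto simp: \<rho>_def)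
  have U4: "ball x (4*\<rho>) \<subseteq> U" using e by (auto simp: \<rho>_def)
  have pos: "\<forall>t\<in>{0<..<3*\<rho>}. sk k t > 0"
  proof
    fix t assume t: "t \<in> {0<..<3*\<rho>}"
    show "sk k t > 0"
    proof (rule sk_pos)
      show "0 < t" using t by auto
      assume "k > 0"
      have r1: "\<rho> \<le> pi / (3 * (sqrt \<bar>k\<bar> + 1))" by (simp add: \<rho>_def)
      have s1: "0 < 3 * (sqrt \<bar>k\<bar> + 1)" by (auto intro: add_nonneg_pos)
      have "\<rho> * (3 * (sqrt \<bar>k\<bar> + 1)) \<le> pi" using r1 s1 by (simp add: pos_le_divide_eq)
      then have "(sqrt \<bar>k\<bar> + 1) * (3 * \<rho>) \<le> pi" by (simp add: algebra_simps)
      moreover have "sqrt k * t \<le> (sqrt \<bar>k\<bar> + 1) * t" using t \<open>k>0\<close> by (auto intro: mult_right_mono)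
      moreover have "(sqrt \<bar>k\<bar> + 1) * t < (sqrt \<bar>k\<bar> + 1) * (3 * \<rho>)"
        using t by (intro mult_strict_left_mono) (auto intro: add_nonneg_pos)
      ultimately show "sqrt k * t < pi" by linarith
    qed
  qed
  have "\<forall>i\<in>J. \<exists>y. y \<in> i \<and> dist x y < \<rho>"
  proof
    fix i assume "i \<in> J"
    then have "i \<inter> ball x \<rho> \<noteq> {}" using comp_near[OF ls U, of i \<rho>] J(1) \<rho> by auto
    then show "\<exists>y. y \<in> i \<and> dist x y < \<rho>" by auto
  qed
  then obtain y where y: "\<And>i. i \<in> J \<Longrightarrow> y i \<in> i \<and> dist x (y i) < \<rho>" by metis
  define r where "r i = dist x (y i)" for i
  have rpos: "0 < r i" if "i \<in> J" for i
  proof -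
    have "y i \<in> U - {x}" using y[OF that] J(1) that in_components_subset by blast
    then show ?thesis by (auto simp: r_def)
  qed
  have rlt: "r i < \<rho>" if "i \<in> J" for i using y[OF that] by (simp add: r_def)
  have opW: "open (i \<inter> ball x d)" if "i \<in> J" for i d
    using open_comp[OF ls _ , of "U - {x}" i] U(1) J(1) that by (auto simp: open_delete)
  have main: "real (card J) - 1 \<le> C * (1 + \<eta>)" if eta: "\<eta> > 0" for \<eta>
  proof -
    have "\<forall>i\<in>J. \<exists>dl>0. dl < r i \<and> (\<forall>\<delta>'. 0 < \<delta>' \<and> \<delta>' \<le> dl \<longrightarrow>
            0 < Vkn k n (r i - \<delta>') (r i) \<and> 0 \<le> Vkn k n (r i) (r i + \<delta>') \<and>
            Vkn k n (r i) (r i + \<delta>') \<le> (1 + \<eta>) * Vkn k n (r i - \<delta>') (r i))"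
    proof
      fix i assume i: "i \<in> J"
      show "\<exists>dl>0. dl < r i \<and> (\<forall>\<delta>'. 0 < \<delta>' \<and> \<delta>' \<le> dl \<longrightarrow>
            0 < Vkn k n (r i - \<delta>') (r i) \<and> 0 \<le> Vkn k n (r i) (r i + \<delta>') \<and>
            Vkn k n (r i) (r i + \<delta>') \<le> (1 + \<eta>) * Vkn k n (r i - \<delta>') (r i))"
        by (rule ratio[OF n pos rpos[OF i] _ eta]) (use rlt[OF i] \<rho> in linarith)
    qed
    then obtain dl where dl: "\<And>i. i \<in> J \<Longrightarrow> dl i > 0 \<and> dl i < r i \<and> (\<forall>\<delta>'. 0 < \<delta>' \<and> \<delta>' \<le> dl i \<longrightarrow>
            0 < Vkn k n (r i - \<delta>') (r i) \<and> 0 \<le> Vkn k n (r i) (r i + \<delta>') \<and>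
            Vkn k n (r i) (r i + \<delta>') \<le> (1 + \<eta>) * Vkn k n (r i - \<delta>') (r i))"
      by metis
    define \<delta> where "\<delta> = Min (insert (\<rho>/3) (dl ` J))"
    have \<delta>pos: "\<delta> > 0" using dl J(2) \<rho> by (auto simp: \<delta>_def)
    have \<delta>le1: "\<delta> \<le> \<rho>/3" unfolding \<delta>_def
      by (rule Min_le) (use J(2) in auto)
    have \<delta>le2: "\<delta> \<le> dl i" if "i \<in> J" for i unfolding \<delta>_def
      by (rule Min_le) (use J(2) that in auto)
    note \<delta>le = \<delta>le1 \<delta>le2
    define W where "W i = i \<inter> ball x \<delta>" for i
    have Wsets: "W i \<in> sets \<mu>" if "i \<in> J" for i
      using opW[OF that] sets by (auto simp: W_def)
    have Wfin: "emeasure \<mu> (W i) \<noteq> \<infinity>" for i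
    proof -
      have "emeasure \<mu> (W i) \<le> emeasure \<mu> (ball x \<delta>)"
        by (rule emeasure_mono) (use sets in \<open>auto simp: W_def\<close>)
      then show ?thesis using balls[OF \<delta>pos, of x] by (auto simp: top_unique)
    qed
    have Wpos: "measure \<mu> (W i) > 0" if i: "i \<in> J" for i
    proof -
      have "i \<inter> ball x \<delta> \<noteq> {}" using comp_near[OF ls U, of i \<delta>] J(1) i \<delta>pos by blast
      then obtain p where p: "p \<in> W i" unfolding W_def by blast
      obtain e' where e': "e' > 0" "ball p e' \<subseteq> W i" using opW[OF i, of \<delta>] p unfolding W_def open_contains_ball
        by blast
      have "0 < emeasure \<mu> (ball p e')" using balls[OF e'(1)] by auto
      also have "\<dots> \<le> emeasure \<mu> (W i)" by (rule emeasure_mono[OF e'(2) Wsets[OF i]])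
      finally show ?thesis using Wfin[of i] by (simp add: emeasure_eq_ennreal_measure)
    qed
    have disj: "disjoint_family_on W J"
      unfolding disjoint_family_on_def W_def using J(1) components_nonoverlap by blast
    define M where "M = measure \<mu> (\<Union>i\<in>J. W i)"
    have Msum: "measure \<mu> (\<Union>i\<in>K. W i) = (\<Sum>i\<in>K. measure \<mu> (W i))" if "K \<subseteq> J" for K
      by (rule measure_finite_Union) (use that J(2) Wsets Wfin disjoint_family_on_mono[OF that disj] in \<open>auto intro: finite_subset\<close>)
    have key: "M - measure \<mu> (W i) \<le> C * (1 + \<eta>) * measure \<mu> (W i)" if i: "i \<in> J" for i
    proof -
      define Z where "Z = (\<Union>j\<in>J - {i}. W j)"
      have MZ: "measure \<mu> Z = M - measure \<mu> (W i)"
        using Msum[of "J - {i}"] Msum[of J] sum.remove[OF J(2) i, of "\<lambda>j. measure \<mu> (W j)"]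
        by (simp add: Z_def M_def)
      have Zsets: "Z \<in> sets \<mu>" using Wsets J(2) by (auto simp: Z_def)
      have Zfin: "emeasure \<mu> Z \<noteq> \<infinity>"
      proof -
        have "emeasure \<mu> Z \<le> emeasure \<mu> (ball x \<delta>)"
          by (rule emeasure_mono) (use sets in \<open>auto simp: Z_def W_def\<close>)
        then show ?thesis using balls[OF \<delta>pos, of x] by (auto simp: top_unique)
      qed
      have dd: "\<delta> < r i" using dl[OF i] \<delta>le(2)[OF i] by linarith
      have V: "0 < Vkn k n (r i - \<delta>) (r i)" "0 \<le> Vkn k n (r i) (r i + \<delta>)"
        "Vkn k n (r i) (r i + \<delta>) \<le> (1 + \<eta>) * Vkn k n (r i - \<delta>) (r i)"
        using dl[OF i] \<delta>le(2)[OF i] \<delta>pos by auto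
      have Zann: "Z \<subseteq> annulus (y i) (r i) (r i + \<delta>)"
      proof
        fix z assume "z \<in> Z"
        then obtain j where j: "j \<in> J" "j \<noteq> i" "z \<in> j" "dist x z < \<delta>" by (auto simp: Z_def W_def)
        have "dist (y i) z = dist (y i) x + dist x z"
          by (rule sepdist[OF ls U4 _ _ j(2)[symmetric]]) (use J(1) i j y[OF i] \<delta>le \<delta>pos in auto)
        moreover have "z \<noteq> x" using j J(1) in_components_subset by blast
        ultimately show "z \<in> annulus (y i) (r i) (r i + \<delta>)"
          using j(4) rpos[OF i] by (auto simp: annulus_def r_def dist_commute)
      qed
      have Ssub: "Sset (y i) (r i - \<delta>) (r i) Z \<subseteq> W i" unfolding W_def
      proof (rule Sset_sub[OF ls U4 _ _ r_def rlt[OF i] \<delta>pos dd])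
        show "i \<in> components (U - {x})" "y i \<in> i" using i J(1) y[OF i] by auto
        show "3 * \<delta> \<le> \<rho>" using \<delta>le by auto
        fix z assume "z \<in> Z"
        then show "\<exists>b. b \<in> components (U - {x}) \<and> b \<noteq> i \<and> z \<in> b \<and> dist x z < \<delta>"
          using J(1) by (auto simp: Z_def W_def)
      qed
      have "emeasure \<mu> Z * ennreal (Vkn k n (r i - \<delta>) (r i))
          \<le> ennreal C * ennreal (Vkn k n (r i) (r i + \<delta>)) * outer_meas \<mu> (Sset (y i) (r i - \<delta>) (r i) Z)"
        by (rule bg[unfolded BG_def, rule_format, of "r i" "r i + \<delta>" "r i - \<delta>" "r i" Z "y i"])
          (use Zsets Zann rpos[OF i] dd \<delta>pos in auto)
      also have "outer_meas \<mu> (Sset (y i) (r i - \<delta>) (r i) Z) \<le> emeasure \<mu> (W i)"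
        unfolding outer_meas_def by (rule INF_lower) (use Ssub Wsets[OF i] in auto)
      then have "ennreal C * ennreal (Vkn k n (r i) (r i + \<delta>)) * outer_meas \<mu> (Sset (y i) (r i - \<delta>) (r i) Z)
           \<le> ennreal C * ennreal (Vkn k n (r i) (r i + \<delta>)) * emeasure \<mu> (W i)"
        by (rule mult_left_mono) simp
      finally have "ennreal (measure \<mu> Z * Vkn k n (r i - \<delta>) (r i))
           \<le> ennreal (C * Vkn k n (r i) (r i + \<delta>) * measure \<mu> (W i))"
        using Zfin Wfin[of i] V C
        by (simp add: emeasure_eq_ennreal_measure ennreal_mult'[symmetric] ennreal_mult[symmetric])
      then have "measure \<mu> Z * Vkn k n (r i - \<delta>) (r i) \<le> C * Vkn k n (r i) (r i + \<delta>) * measure \<mu> (W i)"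
        using V C by (subst (asm) ennreal_le_iff) auto
      also have "\<dots> \<le> C * ((1 + \<eta>) * Vkn k n (r i - \<delta>) (r i)) * measure \<mu> (W i)"
        using V C by (intro mult_right_mono mult_left_mono) auto
      finally have "measure \<mu> Z * Vkn k n (r i - \<delta>) (r i) \<le> (C * (1 + \<eta>) * measure \<mu> (W i)) * Vkn k n (r i - \<delta>) (r i)"
        by (simp add: algebra_simps)
      then show ?thesis using V(1) MZ by simp
    qed
    have "(\<Sum>i\<in>J. M - measure \<mu> (W i)) \<le> (\<Sum>i\<in>J. C * (1 + \<eta>) * measure \<mu> (W i))"
      by (rule sum_mono) (use key in auto)
    then have "real (card J) * M - M \<le> C * (1 + \<eta>) * M"
      using Msum[of J] by (simp add: sum_subtractf sum_distrib_left M_def)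
    moreover have "M > 0" using Msum[of J] J Wpos by (simp add: M_def sum_pos)
    ultimately have "(real (card J) - 1) * M \<le> (C * (1 + \<eta>)) * M" "M > 0"
      by (simp_all add: algebra_simps)
    then show ?thesis by (rule mult_right_le_imp_le)
  qed
  show ?thesis
  proof (rule field_le_epsilon)
    fix e :: real assume "e > 0"
    then have "real (card J) - 1 \<le> C * (1 + e / C)" using main[of "e / C"] C by auto
    moreover have "C * (1 + e / C) = C + e" using C by (simp add: field_simps)
    ultimately show "real (card J) - 1 \<le> C + e" by linarith
  qed
qed


theorem theorem1p1:
  fixes \<mu> :: "'a::metric_space measure" and k n C :: real and x :: 'a
  assumes "metric_measure_space \<mu>"
    and "n \<ge> 1" and "C \<ge> 1"
    and "BG k n C \<mu>"
    and "local_cut_point x"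
  shows "deg x \<le> ennreal (C\<^sup>2 + 1)"
  unfolding deg_def
proof (rule SUP_least)
  fix U assume "U \<in> {U. open U \<and> x \<in> U \<and> connected U}"
  then have U: "open U" "connected U" "x \<in> U" by auto
  define K where "K = components (U - {x})"
  have cnt: "real (card J) - 1 \<le> C" if "J \<subseteq> K" "finite J" "J \<noteq> {}" for J
    by (rule count[OF assms(1,2,3,4) U]) (use that in \<open>auto simp: K_def\<close>)
  have fin: "finite K"
  proof (rule ccontr)
    assume "infinite K"
    then obtain J where J: "finite J" "card J = nat \<lceil>C\<rceil> + 2" "J \<subseteq> K"
      using infinite_arbitrarily_large by blast
    then have "J \<noteq> {}" by auto
    from cnt[OF J(3) J(1) this] J(2) have "real (nat \<lceil>C\<rceil> + 2) - 1 \<le> C" by simp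
    moreover have "C \<le> real (nat \<lceil>C\<rceil>)" using assms(3) by linarith
    ultimately show False by simp
  qed
  have "real (card K) \<le> C + 1"
  proof (cases "K = {}")
    case True then show ?thesis using assms(3) by simp
  next
    case False then show ?thesis using cnt[OF _ fin False] by simp
  qed
  also have "C + 1 \<le> C\<^sup>2 + 1" using assms(3) by (simp add: power2_eq_square)
  finally have "real (card K) \<le> C\<^sup>2 + 1" .
  then have "ennreal (real (card K)) \<le> ennreal (C\<^sup>2 + 1)" by (rule ennreal_leI)
  then show "ncomp (U - {x}) \<le> ennreal (C\<^sup>2 + 1)"
    using fin unfolding ncomp_def K_def[symmetric]
    by (simp only: if_True ennreal_of_nat_eq_real_of_nat)
qed

end
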